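(* Assume the hypotheses of the following setting: $(X_t)_{t\in[0,1]}$ is a centered process as in the context whose KL coefficients $(Z_k)_{k\ge1}$ are mutually independent, each $Z_k$ sub-Gaussian with mean $0$ and parameter $\sqrt{\lambda_k}$; $c_g\in\mathbb R$, $K_g\ge0$, and for each $t$, $g_t:\mathbb R\to\mathbb R$ satisfies $g_t(x)-g_t(y)\le\max(|e^{c_gx}-e^{c_gy}|,K_g|x-y|)$ for all $x,y$; $S_t=g_t(X_t)$ and $S'_t=g_t(X'_t)$ with $X'_t=\sum_{k=1}^{L_X(\epsilon)}Z_ke_k(t)$. Let $T\ge1$, $t_1,\dots,t_T\in[0,1]$, $w_1,\dots,w_T\ge0$ with $\sum_iw_i=1$, and $f:\mathbb R^T\to\mathbb R$ with $|f(x)-f(y)|\le\sum_iw_i|x_i-y_i|$ for all $x,y\in\mathbb R^T$. Then there is a constant $C$ independent of $\epsilon$, $T$, the $t_i$ and the $w_i$ such that for all $\epsilon\in(0,1]$, $$\mathbb E\Big[\big(f(S_{t_1},\dots,S_{t_T})-f(S'_{t_1},\dots,S'_{t_T})\big)^2\Big]\le C\epsilon^2 .$$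
   Context: Standing setup: $(X_t)_{t\in[0,1]}$ is a centered stochastic process with $\mathbb E[X_t^2]<\infty$ whose covariance $k_X(s,t)=\mathbb E[X_sX_t]$ is continuous on $[0,1]^2$. Let $\mathcal K$ be the integral operator $(\mathcal Kf)(t)=\int_0^1k_X(s,t)f(s)\,ds$ on $L^2([0,1])$, with orthonormal eigenfunctions $(e_k)_{k\ge1}$ and eigenvalues $\lambda_1\ge\lambda_2\ge\dots\ge0$. The Karhunen–Loève (KL) expansion is $X_t=\sum_{k\ge1}Z_ke_k(t)$ with $Z_k=\int_0^1X_te_k(t)\,dt$, converging in $L^2(\mathbb P)$ uniformly in $t$; the $Z_k$ are centered and uncorrelated with $\mathbb E[Z_k^2]=\lambda_k$. The truncation index $L_X(\epsilon)$ is the smallest natural number $L$ such that $\mathbb E\big[(\sum_{k=1}^{L}Z_ke_k(t)-X_t)^2\big]\le\epsilon^2$ for all $t\in[0,1]$. A real random variable $W$ with mean $m$ is sub-Gaussian with parameter $s\ge0$ if $\mathbb E[\exp(\theta(W-m))]\le\exp(\theta^2s^2/2)$ for all $\theta\in\mathbb R$. *)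

theory Defs
  imports "HOL-Probability.Probability"
begin

text \<open>Karhunen-Loeve coefficient Z_k = int_0^1 X_t e_k(t) dt (pathwise integral).
  Indices are shifted: the paper's e_1, e_2, ... are e 0, e 1, ... here.\<close>
definition KL_coeff :: "(real \<Rightarrow> 'a \<Rightarrow> real) \<Rightarrow> (nat \<Rightarrow> real \<Rightarrow> real) \<Rightarrow> nat \<Rightarrow> 'a \<Rightarrow> real" where
  "KL_coeff X e k \<omega> = (LINT t:{0..1}|lborel. X t \<omega> * e k t)"

definition cov_kernel :: "'a measure \<Rightarrow> (real \<Rightarrow> 'a \<Rightarrow> real) \<Rightarrow> real \<Rightarrow> real \<Rightarrow> real" where
  "cov_kernel M X s t = (\<integral>\<omega>. X s \<omega> * X t \<omega> \<partial>M)"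

definition KL_trunc :: "'a measure \<Rightarrow> (real \<Rightarrow> 'a \<Rightarrow> real) \<Rightarrow> (nat \<Rightarrow> real \<Rightarrow> real) \<Rightarrow> real \<Rightarrow> nat" where
  "KL_trunc M X e \<epsilon> = (LEAST L::nat. \<forall>t\<in>{0..1}.
      (\<integral>\<omega>. ((\<Sum>k<L. KL_coeff X e k \<omega> * e k t) - X t \<omega>)\<^sup>2 \<partial>M) \<le> \<epsilon>\<^sup>2)"

definition subgaussian :: "'a measure \<Rightarrow> ('a \<Rightarrow> real) \<Rightarrow> real \<Rightarrow> real \<Rightarrow> bool" where
  "subgaussian M W m s \<longleftrightarrow> integrable M W \<and> (\<integral>\<omega>. W \<omega> \<partial>M) = m \<and> s \<ge> 0 \<and>
     (\<forall>\<theta>::real. integrable M (\<lambda>\<omega>. exp (\<theta> * (W \<omega> - m))) \<and>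
        (\<integral>\<omega>. exp (\<theta> * (W \<omega> - m)) \<partial>M) \<le> exp (\<theta>\<^sup>2 * s\<^sup>2 / 2))"

end

theory Submission
  imports Defs
begin


lemma exp_ge_x4: "0 \<le> (x::real) \<Longrightarrow> x^4 / 24 \<le> exp x"
proof -
  assume x: "0 \<le> x"
  obtain t where "exp x = (\<Sum>m<5. (x ^ m) / fact m) + (exp t / fact 5) * x ^ 5"
    using Maclaurin_exp_le[of x 5] by blast
  moreover have "(\<Sum>m<5. (x ^ m) / fact m) = 1 + x + x^2/2 + x^3/6 + x^4/24"
    by (simp add: numeral_eq_Suc fact_numeral lessThan_Suc)
  moreover have "0 \<le> (exp t / fact 5) * x ^ 5" using x by simp
  ultimately show ?thesis using x by simp
qed

lemma x4_le_cosh: "(x::real)^4 \<le> 24 * (exp x + exp (-x))"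
proof (cases "0 \<le> x")
  case True
  hence "x^4 \<le> 24 * exp x" using exp_ge_x4[of x] by (simp add: field_simps)
  moreover have "0 < exp (-x)" by simp
  ultimately show ?thesis unfolding distrib_left by linarith
next
  case False
  hence "x^4 \<le> 24 * exp (-x)" using exp_ge_x4[of "-x"] by (simp add: field_simps)
  moreover have "0 < exp x" by simp
  ultimately show ?thesis unfolding distrib_left by linarith
qed

lemma x2_le_cosh: "(x::real)^2 \<le> 2 * (exp x + exp (-x))"
proof (cases "0 \<le> x")
  case True
  hence "x^2 \<le> 2 * exp x" using exp_lower_Taylor_quadratic[of x] by (simp add: field_simps)
  moreover have "0 < exp (-x)" by simp
  ultimately show ?thesis unfolding distrib_left by linarith
next
  case False
  hence "x^2 \<le> 2 * exp (-x)" using exp_lower_Taylor_quadratic[of "-x"] by (simp add: field_simps)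
  moreover have "0 < exp x" by simp
  ultimately show ?thesis unfolding distrib_left by linarith
qed

lemma exp_diff_bound_aux:
  assumes "b \<le> (a::real)"
  shows "\<bar>exp a - exp b\<bar> \<le> \<bar>a - b\<bar> * (exp a + exp b)"
proof -
  have "exp (b - a) \<ge> 1 + (b - a)" by (rule exp_ge_add_one_self)
  hence "exp b \<ge> exp a * (1 + (b - a))" by (simp add: exp_diff field_simps)
  hence 1: "exp a - exp b \<le> (a - b) * exp a" by (simp add: algebra_simps)
  have 2: "exp b \<le> exp a" using assms by simp
  have 3: "(a - b) * exp a \<le> (a - b) * (exp a + exp b)"
    using assms by (intro mult_left_mono) auto
  have "\<bar>exp a - exp b\<bar> = exp a - exp b" using 2 by simp
  also have "\<dots> \<le> (a - b) * (exp a + exp b)" using 1 3 by linarith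
  also have "\<dots> = \<bar>a - b\<bar> * (exp a + exp b)" using assms by simp
  finally show ?thesis .
qed

lemma exp_diff_bound: "\<bar>exp (a::real) - exp b\<bar> \<le> \<bar>a - b\<bar> * (exp a + exp b)"
proof (cases "b \<le> a")
  case True thus ?thesis by (rule exp_diff_bound_aux)
next
  case False
  hence "\<bar>exp b - exp a\<bar> \<le> \<bar>b - a\<bar> * (exp b + exp a)" by (intro exp_diff_bound_aux) auto
  thus ?thesis by (simp add: abs_minus_commute add.commute)
qed

lemma abs_prod_le: "\<bar>(x::real) * y\<bar> \<le> (x\<^sup>2 + y\<^sup>2) / 2"
proof -
  have "0 \<le> (\<bar>x\<bar> - \<bar>y\<bar>)\<^sup>2" by simp
  hence "2 * (\<bar>x\<bar> * \<bar>y\<bar>) \<le> x\<^sup>2 + y\<^sup>2" by (simp add: power2_diff power2_abs algebra_simps)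
  thus ?thesis by (simp add: abs_mult)
qed

lemma abs_prod_le2: "\<bar>(x::real) * y\<bar> \<le> x\<^sup>2 + y\<^sup>2"
proof -
  have "0 \<le> (\<bar>x\<bar> - \<bar>y\<bar>)\<^sup>2" by simp
  hence "2 * (\<bar>x\<bar> * \<bar>y\<bar>) \<le> x\<^sup>2 + y\<^sup>2" by (simp add: power2_diff power2_abs algebra_simps)
  moreover have "0 \<le> \<bar>x\<bar> * \<bar>y\<bar>" by simp
  ultimately show ?thesis unfolding abs_mult by linarith
qed

lemma sq_expand: "((s::real) - x)\<^sup>2 = s * s - 2 * (s * x) + x * x"
  by (simp add: power2_eq_square algebra_simps)

lemma abs_le_1_sq: "\<bar>x::real\<bar> \<le> 1 + x * x"
proof (cases "\<bar>x\<bar> \<le> 1")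
  case True thus ?thesis using zero_le_square[of x] by linarith
next
  case False
  hence "\<bar>x\<bar> * 1 \<le> \<bar>x\<bar> * \<bar>x\<bar>" by (intro mult_left_mono) auto
  thus ?thesis by (simp add: abs_mult_self_eq)
qed

lemma weighted_sq:
  fixes w u :: "nat \<Rightarrow> real"
  assumes "\<forall>i<T. 0 \<le> w i" "(\<Sum>i<T. w i) = 1"
  shows "(\<Sum>i<T. w i * u i)^2 \<le> (\<Sum>i<T. w i * (u i)^2)"
proof -
  define m where "m = (\<Sum>i<T. w i * u i)"
  have "0 \<le> (\<Sum>i<T. w i * (u i - m)^2)" using assms(1) by (intro sum_nonneg) auto
  also have "\<dots> = (\<Sum>i<T. w i * (u i)^2) - 2 * m * (\<Sum>i<T. w i * u i) + m^2 * (\<Sum>i<T. w i)"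
    by (simp add: power2_diff algebra_simps sum.distrib sum_subtractf sum_distrib_left sum_distrib_right)
  finally show ?thesis using assms(2) by (simp add: m_def power2_eq_square)
qed



lemma amgm_sq: assumes "0 < (\<epsilon>::real)"
  shows "d\<^sup>2 * S\<^sup>2 \<le> d^4 / (2 * \<epsilon>\<^sup>2) + \<epsilon>\<^sup>2 * S^4 / 2"
proof -
  have "0 \<le> (d\<^sup>2 - \<epsilon>\<^sup>2 * S\<^sup>2)\<^sup>2" by simp
  moreover have "(d\<^sup>2 - \<epsilon>\<^sup>2 * S\<^sup>2)\<^sup>2 = d^4 + \<epsilon>^4 * S^4 - 2 * (d\<^sup>2 * (\<epsilon>\<^sup>2 * S\<^sup>2))"
    by (simp add: power2_eq_square power4_eq_xxxx algebra_simps)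
  ultimately have "2 * (d\<^sup>2 * (\<epsilon>\<^sup>2 * S\<^sup>2)) \<le> d^4 + \<epsilon>^4 * S^4" by linarith
  hence "2 * \<epsilon>\<^sup>2 * (d\<^sup>2 * S\<^sup>2) \<le> d^4 + \<epsilon>^4 * S^4" by (simp add: mult_ac)
  moreover have "0 < 2 * \<epsilon>\<^sup>2" using assms by simp
  ultimately have "d\<^sup>2 * S\<^sup>2 \<le> (d^4 + \<epsilon>^4 * S^4) / (2 * \<epsilon>\<^sup>2)"
    by (simp add: pos_le_divide_eq mult_ac)
  also have "\<dots> = d^4 / (2 * \<epsilon>\<^sup>2) + \<epsilon>\<^sup>2 * S^4 / 2"
    using assms by (simp add: field_simps power2_eq_square power4_eq_xxxx)
  finally show ?thesis .
qed

lemma sum4: "((a::real) + b)^4 \<le> 8 * (a^4 + b^4)"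
proof -
  have "0 \<le> (a - b)\<^sup>2 * (7 * a\<^sup>2 + 10 * a * b + 7 * b\<^sup>2)"
  proof -
    have "0 \<le> 7 * a\<^sup>2 + 10 * a * b + 7 * b\<^sup>2"
    proof -
      have "0 \<le> 5 * (a + b)\<^sup>2 + 2 * a\<^sup>2 + 2 * b\<^sup>2" by simp
      thus ?thesis by (simp add: power2_sum algebra_simps)
    qed
    thus ?thesis by simp
  qed
  thus ?thesis by (simp add: power2_eq_square power4_eq_xxxx algebra_simps eval_nat_numeral)
qed

lemma max_sq: "0 \<le> (b::real) \<Longrightarrow> (max \<bar>a\<bar> b)\<^sup>2 \<le> a\<^sup>2 + b\<^sup>2"
  by (cases "\<bar>a\<bar> \<le> b") (auto simp: max_def power2_abs)

lemma gpoint: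
  fixes g :: "real \<Rightarrow> real"
  assumes gc: "\<And>x y. g x - g y \<le> max \<bar>exp (c * x) - exp (c * y)\<bar> (K * \<bar>x - y\<bar>)"
    and K: "0 \<le> K" and \<epsilon>: "0 < \<epsilon>"
  shows "(g x - g y)\<^sup>2 \<le> c\<^sup>2 * ((x - y)^4 / (2 * \<epsilon>\<^sup>2)) + 4 * c\<^sup>2 * \<epsilon>\<^sup>2 * (exp (4 * c * x) + exp (4 * c * y)) + K\<^sup>2 * (x - y)\<^sup>2"
proof -
  define m where "m = max \<bar>exp (c * x) - exp (c * y)\<bar> (K * \<bar>x - y\<bar>)"
  have m0: "0 \<le> m" unfolding m_def by simp
  have "g x - g y \<le> m" using gc unfolding m_def .
  moreover have "g y - g x \<le> m" using gc[of y x] unfolding m_def by (simp add: abs_minus_commute)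
  ultimately have "\<bar>g x - g y\<bar> \<le> m" by linarith
  hence "(g x - g y)\<^sup>2 \<le> m\<^sup>2" by (metis abs_ge_zero power2_abs power_mono)

  define S where "S = exp (c * x) + exp (c * y)"
  define E where "E = exp (4 * c * x) + exp (4 * c * y)"
  have A: "m\<^sup>2 \<le> (exp (c * x) - exp (c * y))\<^sup>2 + K\<^sup>2 * (x - y)\<^sup>2"
  proof -
    have "m\<^sup>2 \<le> (exp (c * x) - exp (c * y))\<^sup>2 + (K * \<bar>x - y\<bar>)\<^sup>2"
      unfolding m_def using K by (intro max_sq) simp
    also have "(K * \<bar>x - y\<bar>)\<^sup>2 = K\<^sup>2 * (x - y)\<^sup>2" by (simp add: power_mult_distrib power2_abs)
    finally show ?thesis .
  qed
  have Bq: "(exp (c * x) - exp (c * y))\<^sup>2 \<le> c\<^sup>2 * ((x - y)\<^sup>2 * S\<^sup>2)"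
  proof -
    have "\<bar>exp (c * x) - exp (c * y)\<bar> \<le> \<bar>c * x - c * y\<bar> * (exp (c * x) + exp (c * y))"
      by (rule exp_diff_bound)
    hence "\<bar>exp (c * x) - exp (c * y)\<bar>\<^sup>2 \<le> (\<bar>c * x - c * y\<bar> * (exp (c * x) + exp (c * y)))\<^sup>2"
      by (intro power_mono) auto
    also have "\<dots> = c\<^sup>2 * ((x - y)\<^sup>2 * S\<^sup>2)"
      unfolding S_def by (simp add: power_mult_distrib power2_abs right_diff_distrib[symmetric] mult_ac)
    finally show ?thesis by simp
  qed
  have Cq: "(x - y)\<^sup>2 * S\<^sup>2 \<le> (x - y)^4 / (2 * \<epsilon>\<^sup>2) + \<epsilon>\<^sup>2 * S^4 / 2"
    by (rule amgm_sq[OF \<epsilon>])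
  have Dq: "S^4 \<le> 8 * E"
  proof -
    have "(exp (c * x))^4 = exp (4 * c * x)" by (simp add: exp_of_nat_mult[symmetric] mult_ac)
    moreover have "(exp (c * y))^4 = exp (4 * c * y)" by (simp add: exp_of_nat_mult[symmetric] mult_ac)
    ultimately show ?thesis using sum4[of "exp (c * x)" "exp (c * y)"] unfolding S_def E_def by simp
  qed
  have "\<epsilon>\<^sup>2 * S^4 / 2 \<le> \<epsilon>\<^sup>2 * (8 * E) / 2"
    using Dq by (intro divide_right_mono mult_left_mono) auto
  with Cq have "(x - y)\<^sup>2 * S\<^sup>2 \<le> (x - y)^4 / (2 * \<epsilon>\<^sup>2) + \<epsilon>\<^sup>2 * (8 * E) / 2" by linarith
  hence "c\<^sup>2 * ((x - y)\<^sup>2 * S\<^sup>2) \<le> c\<^sup>2 * ((x - y)^4 / (2 * \<epsilon>\<^sup>2) + \<epsilon>\<^sup>2 * (8 * E) / 2)"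
    by (intro mult_left_mono) auto
  also have "\<dots> = c\<^sup>2 * ((x - y)^4 / (2 * \<epsilon>\<^sup>2)) + 4 * c\<^sup>2 * \<epsilon>\<^sup>2 * E"
    by (simp add: algebra_simps)
  finally have "c\<^sup>2 * ((x - y)\<^sup>2 * S\<^sup>2) \<le> c\<^sup>2 * ((x - y)^4 / (2 * \<epsilon>\<^sup>2)) + 4 * c\<^sup>2 * \<epsilon>\<^sup>2 * E" .
  with Bq A \<open>(g x - g y)\<^sup>2 \<le> m\<^sup>2\<close> show ?thesis unfolding E_def by linarith
qed



locale KLS = prob_space M for M :: "'a measure" +
  fixes X :: "real \<Rightarrow> 'a \<Rightarrow> real" and e :: "nat \<Rightarrow> real \<Rightarrow> real" and lam :: "nat \<Rightarrow> real"
  assumes X_meas: "(\<lambda>(t,\<omega>). X t \<omega>) \<in> borel_measurable (restrict_space lborel {0..1} \<Otimes>\<^sub>M M)"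
    and X_rv: "\<And>t. t \<in> {0..1} \<Longrightarrow> X t \<in> borel_measurable M"
    and X_int: "\<And>t. t \<in> {0..1} \<Longrightarrow> integrable M (X t)"
    and X_sq: "\<And>t. t \<in> {0..1} \<Longrightarrow> integrable M (\<lambda>\<omega>. (X t \<omega>)\<^sup>2)"
    and cov_cont: "continuous_on ({0..1} \<times> {0..1}) (\<lambda>(s,t). cov_kernel M X s t)"
    and e_meas: "\<And>k. e k \<in> borel_measurable lborel"
    and e_orth: "\<And>j k. set_integrable lborel {0..1} (\<lambda>t. e j t * e k t)
        \<and> (LINT t:{0..1}|lborel. e j t * e k t) = (if j = k then 1 else 0)"
    and e_eigen: "\<And>k t. t \<in> {0..1} \<Longrightarrow>
        (LINT s:{0..1}|lborel. cov_kernel M X s t * e k s) = lam k * e k t"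
    and lam_nonneg: "\<And>k. lam k \<ge> 0"
    and KL_conv: "\<And>\<delta>. \<delta> > 0 \<Longrightarrow> \<exists>N. \<forall>L\<ge>N. \<forall>t\<in>{0..1}.
        (\<integral>\<omega>. ((\<Sum>k<L. KL_coeff X e k \<omega> * e k t) - X t \<omega>)\<^sup>2 \<partial>M) \<le> \<delta>"
    and Z_indep: "indep_vars (\<lambda>_. borel) (KL_coeff X e) UNIV"
    and Z_subg: "\<And>k. subgaussian M (KL_coeff X e k) 0 (sqrt (lam k))"
begin

abbreviation "Z \<equiv> KL_coeff X e"

lemma Z_meas[measurable]: "Z k \<in> borel_measurable M"
  using Z_indep unfolding indep_vars_def by auto

lemma subg_int: "integrable M (\<lambda>\<omega>. exp (\<theta> * Z k \<omega>))"
  using Z_subg[of k] unfolding subgaussian_def by auto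

lemma subg_bound: "(\<integral>\<omega>. exp (\<theta> * Z k \<omega>) \<partial>M) \<le> exp (\<theta>\<^sup>2 * lam k / 2)"
  using Z_subg[of k] lam_nonneg[of k] unfolding subgaussian_def by auto

lemma Z_int: "integrable M (Z k)"
  using Z_subg[of k] unfolding subgaussian_def by auto

lemma Z_mean: "(\<integral>\<omega>. Z k \<omega> \<partial>M) = 0"
  using Z_subg[of k] unfolding subgaussian_def by auto

lemma Z_sq_int: "integrable M (\<lambda>\<omega>. (Z k \<omega>)\<^sup>2)"
proof -
  have i: "integrable M (\<lambda>\<omega>. 2 * (exp (1 * Z k \<omega>) + exp ((-1) * Z k \<omega>)))"
    using subg_int[of 1 k] subg_int[of "-1" k] by (intro integrable_mult_right Bochner_Integration.integrable_add)
  have a: "AE \<omega> in M. norm ((Z k \<omega>)\<^sup>2) \<le> norm (2 * (exp (1 * Z k \<omega>) + exp ((-1) * Z k \<omega>)))"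
    using x2_le_cosh by (auto intro!: AE_I2 simp: abs_of_nonneg add_nonneg_nonneg)
  show ?thesis by (rule Bochner_Integration.integrable_bound[OF i _ a]) simp
qed

lemma cov_bound: obtains B where "0 \<le> B" "\<And>s t. s \<in> {0..1} \<Longrightarrow> t \<in> {0..1} \<Longrightarrow> \<bar>cov_kernel M X s t\<bar> \<le> B"
proof -
  have "compact ((\<lambda>(s,t). cov_kernel M X s t) ` ({0..1} \<times> {0..1}))"
    by (intro compact_continuous_image cov_cont compact_Times compact_Icc)
  then obtain B where B: "\<forall>x\<in>(\<lambda>(s,t). cov_kernel M X s t) ` ({0..1} \<times> {0..1}). norm x \<le> B"
    using compact_imp_bounded bounded_iff by metis
  show ?thesis
  proof
    show "0 \<le> B" using B[rule_format, of "cov_kernel M X 0 0"] by force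
    fix s t :: real assume "s \<in> {0..1}" "t \<in> {0..1}"
    thus "\<bar>cov_kernel M X s t\<bar> \<le> B" using B by force
  qed
qed

definition "N = restrict_space lborel {0..1::real}"

lemma N_space[simp]: "space N = {0..1}"
  by (simp add: N_def space_restrict_space)

lemma N_finite: "finite_measure N"
proof (rule finite_measureI)
  have "emeasure N (space N) = emeasure lborel {0..1::real}"
    unfolding N_def by (subst emeasure_restrict_space) (auto simp: space_restrict_space)
  thus "emeasure N (space N) \<noteq> \<infinity>" by simp
qed

lemma N_sf: "sigma_finite_measure N"
  using N_finite by (simp add: finite_measure_def)

lemma LINT_N: "(LINT t:{0..1}|lborel. f t) = (\<integral>t. f t \<partial>N)" for f :: "real \<Rightarrow> real"
  unfolding N_def set_lebesgue_integral_def using integral_restrict_space[of "{0..1::real}" lborel f] by simp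

lemma set_integrable_N: "set_integrable lborel {0..1} f \<longleftrightarrow> integrable N f" for f :: "real \<Rightarrow> real"
  unfolding N_def set_integrable_def using integrable_restrict_space[of "{0..1::real}" lborel f] by simp

lemma meas_N: "f \<in> borel_measurable lborel \<Longrightarrow> f \<in> borel_measurable N"
  unfolding N_def by (rule measurable_restrict_space1)

lemma e_sq_int: "integrable N (\<lambda>t. e k t * e k t)"
  using e_orth[of k k] set_integrable_N by auto

lemma e_int: "integrable N (e k)"
proof -
  interpret N: finite_measure N by (rule N_finite)
  have i: "integrable N (\<lambda>t. 1 + e k t * e k t)" using e_sq_int by auto
  show ?thesis
  proof (rule Bochner_Integration.integrable_bound[OF i])
    show "e k \<in> borel_measurable N" using meas_N[OF e_meas] .
    show "AE t in N. norm (e k t) \<le> norm (1 + e k t * e k t)"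
    proof (rule AE_I2)
      fix t have "\<bar>e k t\<bar> \<le> 1 + e k t * e k t"
        by (rule abs_le_1_sq)
      thus "norm (e k t) \<le> norm (1 + e k t * e k t)" by simp
    qed
  qed
qed

lemma EX2_bound: "t \<in> {0..1} \<Longrightarrow> \<bar>cov_kernel M X t t\<bar> \<le> B \<Longrightarrow> (\<integral>\<omega>. (X t \<omega>)\<^sup>2 \<partial>M) \<le> B"
  unfolding cov_kernel_def by (simp add: power2_eq_square)

lemma fubini_Z:
  assumes Wm[measurable]: "W \<in> borel_measurable M" and W2: "integrable M (\<lambda>\<omega>. (W \<omega>)\<^sup>2)"
  shows "(\<integral>\<omega>. W \<omega> * Z k \<omega> \<partial>M) = (\<integral>t. e k t * (\<integral>\<omega>. W \<omega> * X t \<omega> \<partial>M) \<partial>N)"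
proof -
  obtain B where B: "0 \<le> B" "\<And>s t. s \<in> {0..1} \<Longrightarrow> t \<in> {0..1} \<Longrightarrow> \<bar>cov_kernel M X s t\<bar> \<le> B"
    using cov_bound by blast
  interpret NS: sigma_finite_measure N by (rule N_sf)
  interpret P: pair_sigma_finite N M by unfold_locales
  define h where "h = (\<lambda>t \<omega>. X t \<omega> * e k t * W \<omega>)"
  have Xm: "(\<lambda>z. X (fst z) (snd z)) \<in> borel_measurable (N \<Otimes>\<^sub>M M)"
    using X_meas unfolding N_def by (simp add: case_prod_beta')
  have em: "(\<lambda>z. e k (fst z)) \<in> borel_measurable (N \<Otimes>\<^sub>M M)"
    by (rule measurable_compose[OF measurable_fst meas_N[OF e_meas]])
  have Wm2: "(\<lambda>z. W (snd z)) \<in> borel_measurable (N \<Otimes>\<^sub>M M)"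
    by (rule measurable_compose[OF measurable_snd Wm])
  have hm: "(\<lambda>z. h (fst z) (snd z)) \<in> borel_measurable (N \<Otimes>\<^sub>M M)"
    unfolding h_def using Xm em Wm2 by (intro borel_measurable_times) auto
  define c where "c = (B + (\<integral>\<omega>. (W \<omega>)\<^sup>2 \<partial>M)) / 2"
  have inner: "(\<integral>\<^sup>+\<omega>. ennreal (norm (h t \<omega>)) \<partial>M) \<le> ennreal (\<bar>e k t\<bar> * c)" if t: "t \<in> {0..1}" for t
  proof -
    have "(\<integral>\<^sup>+\<omega>. ennreal (norm (h t \<omega>)) \<partial>M) \<le> (\<integral>\<^sup>+\<omega>. ennreal (\<bar>e k t\<bar> * (((X t \<omega>)\<^sup>2 + (W \<omega>)\<^sup>2) / 2)) \<partial>M)"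
    proof (rule nn_integral_mono)
      fix \<omega>
      have "\<bar>X t \<omega> * W \<omega>\<bar> \<le> ((X t \<omega>)\<^sup>2 + (W \<omega>)\<^sup>2) / 2"
        by (rule abs_prod_le)
      hence "\<bar>e k t\<bar> * \<bar>X t \<omega> * W \<omega>\<bar> \<le> \<bar>e k t\<bar> * (((X t \<omega>)\<^sup>2 + (W \<omega>)\<^sup>2) / 2)"
        by (rule mult_left_mono) simp
      thus "ennreal (norm (h t \<omega>)) \<le> ennreal (\<bar>e k t\<bar> * (((X t \<omega>)\<^sup>2 + (W \<omega>)\<^sup>2) / 2))"
        unfolding h_def by (intro ennreal_leI) (simp add: abs_mult mult_ac)
    qed
    also have "\<dots> = ennreal (\<integral>\<omega>. \<bar>e k t\<bar> * (((X t \<omega>)\<^sup>2 + (W \<omega>)\<^sup>2) / 2) \<partial>M)"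
      using X_sq[OF t] W2 by (intro nn_integral_eq_integral) auto
    also have "(\<integral>\<omega>. \<bar>e k t\<bar> * (((X t \<omega>)\<^sup>2 + (W \<omega>)\<^sup>2) / 2) \<partial>M)
        = \<bar>e k t\<bar> * (((\<integral>\<omega>. (X t \<omega>)\<^sup>2 \<partial>M) + (\<integral>\<omega>. (W \<omega>)\<^sup>2 \<partial>M)) / 2)"
      using X_sq[OF t] W2 by simp
    also have "\<dots> \<le> \<bar>e k t\<bar> * c"
      unfolding c_def using EX2_bound[OF t B(2)[OF t t]] by (intro mult_left_mono) auto
    finally show ?thesis by (simp add: ennreal_leI)
  qed
  have int: "integrable (N \<Otimes>\<^sub>M M) (\<lambda>(t,\<omega>). h t \<omega>)"
    unfolding integrable_iff_bounded
  proof
    show "(\<lambda>(t,\<omega>). h t \<omega>) \<in> borel_measurable (N \<Otimes>\<^sub>M M)" using hm by (simp add: case_prod_beta')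
    have "(\<integral>\<^sup>+z. ennreal (norm ((\<lambda>(t,\<omega>). h t \<omega>) z)) \<partial>(N \<Otimes>\<^sub>M M))
        = (\<integral>\<^sup>+t. \<integral>\<^sup>+\<omega>. ennreal (norm (h t \<omega>)) \<partial>M \<partial>N)"
      using hm by (subst nn_integral_fst[symmetric]) (auto simp: case_prod_beta')
    also have "\<dots> \<le> (\<integral>\<^sup>+t. ennreal (\<bar>e k t\<bar> * c) \<partial>N)"
      using inner by (intro nn_integral_mono) auto
    also have "\<dots> = ennreal (\<integral>t. \<bar>e k t\<bar> * c \<partial>N)"
      using e_int[of k] B(1) W2 unfolding c_def
      by (intro nn_integral_eq_integral) (auto intro!: integral_nonneg_AE)
    also have "\<dots> < \<infinity>" by simp
    finally show "(\<integral>\<^sup>+z. ennreal (norm ((\<lambda>(t,\<omega>). h t \<omega>) z)) \<partial>(N \<Otimes>\<^sub>M M)) < \<infinity>" .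
  qed
  have F: "(\<integral>\<omega>. (\<integral>t. h t \<omega> \<partial>N) \<partial>M) = (\<integral>t. (\<integral>\<omega>. h t \<omega> \<partial>M) \<partial>N)"
    by (rule P.Fubini_integral[OF int])
  have L: "(\<integral>t. h t \<omega> \<partial>N) = W \<omega> * Z k \<omega>" for \<omega>
    unfolding h_def KL_coeff_def LINT_N by simp
  have R: "(\<integral>\<omega>. h t \<omega> \<partial>M) = e k t * (\<integral>\<omega>. W \<omega> * X t \<omega> \<partial>M)" for t
  proof -
    have "(\<integral>\<omega>. h t \<omega> \<partial>M) = (\<integral>\<omega>. e k t * (W \<omega> * X t \<omega>) \<partial>M)"
      unfolding h_def by (simp add: mult_ac)
    thus ?thesis by simp
  qed
  show ?thesis using F unfolding L R .
qed

lemma prod_int: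
  fixes u v :: "'a \<Rightarrow> real"
  assumes [measurable]: "u \<in> borel_measurable M" "v \<in> borel_measurable M"
    and "integrable M (\<lambda>\<omega>. (u \<omega>)\<^sup>2)" "integrable M (\<lambda>\<omega>. (v \<omega>)\<^sup>2)"
  shows "integrable M (\<lambda>\<omega>. u \<omega> * v \<omega>)"
proof -
  have i: "integrable M (\<lambda>\<omega>. (u \<omega>)\<^sup>2 + (v \<omega>)\<^sup>2)" using assms by auto
  have a: "AE \<omega> in M. norm (u \<omega> * v \<omega>) \<le> norm ((u \<omega>)\<^sup>2 + (v \<omega>)\<^sup>2)"
  proof (rule AE_I2)
    fix \<omega>
    have "\<bar>u \<omega> * v \<omega>\<bar> \<le> (u \<omega>)\<^sup>2 + (v \<omega>)\<^sup>2"
      by (rule abs_prod_le2)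
    thus "norm (u \<omega> * v \<omega>) \<le> norm ((u \<omega>)\<^sup>2 + (v \<omega>)\<^sup>2)" by simp
  qed
  show ?thesis by (rule Bochner_Integration.integrable_bound[OF i _ a]) simp
qed

lemma ZZ_int: "integrable M (\<lambda>\<omega>. Z j \<omega> * Z k \<omega>)"
  by (rule prod_int) (auto intro: Z_sq_int)

lemma XZ_int: "t \<in> {0..1} \<Longrightarrow> integrable M (\<lambda>\<omega>. Z k \<omega> * X t \<omega>)"
  by (rule prod_int) (auto intro: Z_sq_int X_rv X_sq)

lemma ZX: assumes t: "t \<in> {0..1}" shows "(\<integral>\<omega>. Z k \<omega> * X t \<omega> \<partial>M) = lam k * e k t"
proof -
  have "(\<integral>\<omega>. Z k \<omega> * X t \<omega> \<partial>M) = (\<integral>\<omega>. X t \<omega> * Z k \<omega> \<partial>M)" by (simp add: mult.commute)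
  also have "\<dots> = (\<integral>s. e k s * (\<integral>\<omega>. X t \<omega> * X s \<omega> \<partial>M) \<partial>N)"
    by (rule fubini_Z[OF X_rv[OF t] X_sq[OF t]])
  also have "\<dots> = (\<integral>s. cov_kernel M X s t * e k s \<partial>N)"
    unfolding cov_kernel_def by (simp add: mult_ac)
  also have "\<dots> = lam k * e k t" using e_eigen[OF t, of k] unfolding LINT_N .
  finally show ?thesis .
qed

lemma ZZ_diag: "(\<integral>\<omega>. Z k \<omega> * Z k \<omega> \<partial>M) = lam k"
proof -
  have "(\<integral>\<omega>. Z k \<omega> * Z k \<omega> \<partial>M) = (\<integral>t. e k t * (\<integral>\<omega>. Z k \<omega> * X t \<omega> \<partial>M) \<partial>N)"
    by (rule fubini_Z[OF Z_meas Z_sq_int])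
  also have "\<dots> = (\<integral>t. lam k * (e k t * e k t) \<partial>N)"
    by (rule Bochner_Integration.integral_cong) (auto simp: ZX)
  also have "\<dots> = lam k"
    using e_orth[of k k] unfolding LINT_N by simp
  finally show ?thesis .
qed

lemma ZZ_off: assumes "j \<noteq> k" shows "(\<integral>\<omega>. Z j \<omega> * Z k \<omega> \<partial>M) = 0"
proof -
  have ind: "indep_vars (\<lambda>_. borel) Z {j,k}"
    by (rule indep_vars_subset[OF Z_indep]) auto
  have "(\<integral>\<omega>. (\<Prod>i\<in>{j,k}. Z i \<omega>) \<partial>M) = (\<Prod>i\<in>{j,k}. \<integral>\<omega>. Z i \<omega> \<partial>M)"
    by (rule indep_vars_lebesgue_integral[OF _ ind]) (auto intro: Z_int)
  thus ?thesis using assms by (simp add: Z_mean)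
qed

lemma ZZ: "(\<integral>\<omega>. Z j \<omega> * Z k \<omega> \<partial>M) = (if j = k then lam k else 0)"
  using ZZ_diag ZZ_off by auto


end


context KLS begin
lemma err_formula:
  assumes t: "t \<in> {0..1}"
  shows "(\<integral>\<omega>. ((\<Sum>k<L. Z k \<omega> * e k t) - X t \<omega>)\<^sup>2 \<partial>M) = cov_kernel M X t t - (\<Sum>k<L. lam k * (e k t)\<^sup>2)"
proof -
  define a where "a k = e k t" for k
  have pw: "((\<Sum>k<L. Z k \<omega> * e k t) - X t \<omega>)\<^sup>2 =
     (\<Sum>j<L. \<Sum>k<L. a j * a k * (Z j \<omega> * Z k \<omega>)) - 2 * (\<Sum>k<L. a k * (Z k \<omega> * X t \<omega>)) + X t \<omega> * X t \<omega>" for \<omega>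
  proof -
    have "(\<Sum>k<L. Z k \<omega> * e k t) * (\<Sum>k<L. Z k \<omega> * e k t) = (\<Sum>j<L. \<Sum>k<L. a j * a k * (Z j \<omega> * Z k \<omega>))"
      unfolding sum_product a_def by (simp add: mult_ac)
    moreover have "(\<Sum>k<L. Z k \<omega> * e k t) * X t \<omega> = (\<Sum>k<L. a k * (Z k \<omega> * X t \<omega>))"
      unfolding sum_distrib_right a_def by (simp add: mult_ac)
    ultimately show ?thesis unfolding sq_expand by (simp only:)
  qed
  have i1: "integrable M (\<lambda>\<omega>. \<Sum>j<L. \<Sum>k<L. a j * a k * (Z j \<omega> * Z k \<omega>))"
    by (intro Bochner_Integration.integrable_sum integrable_mult_right ZZ_int)
  have i2: "integrable M (\<lambda>\<omega>. 2 * (\<Sum>k<L. a k * (Z k \<omega> * X t \<omega>)))"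
    by (intro Bochner_Integration.integrable_sum integrable_mult_right XZ_int[OF t])
  have i3: "integrable M (\<lambda>\<omega>. X t \<omega> * X t \<omega>)"
    using X_sq[OF t] by (simp add: power2_eq_square)
  have "(\<integral>\<omega>. ((\<Sum>k<L. Z k \<omega> * e k t) - X t \<omega>)\<^sup>2 \<partial>M) =
     (\<integral>\<omega>. (\<Sum>j<L. \<Sum>k<L. a j * a k * (Z j \<omega> * Z k \<omega>)) - 2 * (\<Sum>k<L. a k * (Z k \<omega> * X t \<omega>)) + X t \<omega> * X t \<omega> \<partial>M)"
    unfolding pw ..
  also have "\<dots> = (\<integral>\<omega>. (\<Sum>j<L. \<Sum>k<L. a j * a k * (Z j \<omega> * Z k \<omega>)) \<partial>M)
      - (\<integral>\<omega>. 2 * (\<Sum>k<L. a k * (Z k \<omega> * X t \<omega>)) \<partial>M) + (\<integral>\<omega>. X t \<omega> * X t \<omega> \<partial>M)"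
    by (simp only: Bochner_Integration.integral_add[OF Bochner_Integration.integrable_diff[OF i1 i2] i3]
        Bochner_Integration.integral_diff[OF i1 i2])
  also have "(\<integral>\<omega>. (\<Sum>j<L. \<Sum>k<L. a j * a k * (Z j \<omega> * Z k \<omega>)) \<partial>M) = (\<Sum>j<L. \<Sum>k<L. a j * a k * (if j = k then lam k else 0))"
  proof -
    have "(\<integral>\<omega>. (\<Sum>j<L. \<Sum>k<L. a j * a k * (Z j \<omega> * Z k \<omega>)) \<partial>M) = (\<Sum>j<L. \<integral>\<omega>. (\<Sum>k<L. a j * a k * (Z j \<omega> * Z k \<omega>)) \<partial>M)"
      by (rule Bochner_Integration.integral_sum) (intro Bochner_Integration.integrable_sum integrable_mult_right ZZ_int)
    also have "\<dots> = (\<Sum>j<L. \<Sum>k<L. \<integral>\<omega>. a j * a k * (Z j \<omega> * Z k \<omega>) \<partial>M)"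
      by (intro sum.cong refl Bochner_Integration.integral_sum integrable_mult_right ZZ_int)
    also have "\<dots> = (\<Sum>j<L. \<Sum>k<L. a j * a k * (if j = k then lam k else 0))"
      by (intro sum.cong refl) (simp only: integral_mult_right_zero ZZ)
    finally show ?thesis .
  qed
  also have "\<dots> = (\<Sum>k<L. lam k * (a k)\<^sup>2)"
  proof (intro sum.cong refl)
    fix j assume j: "j \<in> {..<L}"
    have "(\<Sum>k<L. a j * a k * (if j = k then lam k else 0)) = (\<Sum>k<L. if j = k then a j * a j * lam j else 0)"
      by (intro sum.cong refl) auto
    also have "\<dots> = a j * a j * lam j" using j by simp
    finally show "(\<Sum>k<L. a j * a k * (if j = k then lam k else 0)) = lam j * (a j)\<^sup>2"
      by (simp add: power2_eq_square)
  qed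
  also have "(\<integral>\<omega>. 2 * (\<Sum>k<L. a k * (Z k \<omega> * X t \<omega>)) \<partial>M) = 2 * (\<integral>\<omega>. (\<Sum>k<L. a k * (Z k \<omega> * X t \<omega>)) \<partial>M)"
    by (rule integral_mult_right_zero)
  also have "(\<integral>\<omega>. (\<Sum>k<L. a k * (Z k \<omega> * X t \<omega>)) \<partial>M) = (\<Sum>k<L. \<integral>\<omega>. a k * (Z k \<omega> * X t \<omega>) \<partial>M)"
    by (rule Bochner_Integration.integral_sum) (auto intro: XZ_int[OF t])
  also have "\<dots> = (\<Sum>k<L. a k * (lam k * e k t))"
    by (intro sum.cong refl) (simp only: integral_mult_right_zero ZX[OF t])
  also have "\<dots> = (\<Sum>k<L. lam k * (a k)\<^sup>2)"
    by (intro sum.cong refl) (simp add: a_def power2_eq_square)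
  finally show ?thesis unfolding cov_kernel_def a_def by simp
qed

end


context KLS begin
lemma proxy_le_cov:
  assumes t: "t \<in> {0..1}" shows "(\<Sum>k<L. lam k * (e k t)\<^sup>2) \<le> cov_kernel M X t t"
proof -
  have "0 \<le> (\<integral>\<omega>. ((\<Sum>k<L. Z k \<omega> * e k t) - X t \<omega>)\<^sup>2 \<partial>M)" by (intro integral_nonneg_AE AE_I2) simp
  thus ?thesis using err_formula[OF t, of L] by linarith
qed
lemma proxy_tail:
  assumes t: "t \<in> {0..1}" and LN: "L \<le> N'"
  shows "(\<Sum>k\<in>{L..<N'}. lam k * (e k t)\<^sup>2) \<le> (\<integral>\<omega>. ((\<Sum>k<L. Z k \<omega> * e k t) - X t \<omega>)\<^sup>2 \<partial>M)"
proof -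
  have "0 \<le> (\<integral>\<omega>. ((\<Sum>k<N'. Z k \<omega> * e k t) - X t \<omega>)\<^sup>2 \<partial>M)" by (intro integral_nonneg_AE AE_I2) simp
  moreover have "(\<Sum>k<N'. lam k * (e k t)\<^sup>2) = (\<Sum>k<L. lam k * (e k t)\<^sup>2) + (\<Sum>k\<in>{L..<N'}. lam k * (e k t)\<^sup>2)"
    using sum.atLeastLessThan_concat[of 0 L N' "\<lambda>k. lam k * (e k t)\<^sup>2"] LN by (simp add: atLeast0LessThan)
  ultimately show ?thesis using err_formula[OF t, of L] err_formula[OF t, of N'] by linarith
qed

end


context KLS begin
lemma mgf_sum:
  assumes F: "finite F"
  shows "integrable M (\<lambda>\<omega>. exp (\<theta> * (\<Sum>k\<in>F. a k * Z k \<omega>)))"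
    "(\<integral>\<omega>. exp (\<theta> * (\<Sum>k\<in>F. a k * Z k \<omega>)) \<partial>M) \<le> exp (\<theta>\<^sup>2 * (\<Sum>k\<in>F. (a k)\<^sup>2 * lam k) / 2)"
proof -
  define Y where "Y k x = exp ((\<theta> * a k) * x)" for k x
  have ind: "indep_vars (\<lambda>_. borel) (\<lambda>k \<omega>. Y k (Z k \<omega>)) F"
    by (rule indep_vars_compose2[OF indep_vars_subset[OF Z_indep]]) (auto simp: Y_def)
  have pw: "exp (\<theta> * (\<Sum>k\<in>F. a k * Z k \<omega>)) = (\<Prod>k\<in>F. Y k (Z k \<omega>))" for \<omega>
    unfolding Y_def sum_distrib_left exp_sum[OF F] by (simp add: mult_ac)
  have ints: "integrable M (\<lambda>\<omega>. Y k (Z k \<omega>))" for k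
    unfolding Y_def by (rule subg_int)
  show "integrable M (\<lambda>\<omega>. exp (\<theta> * (\<Sum>k\<in>F. a k * Z k \<omega>)))"
    unfolding pw by (rule indep_vars_integrable[OF F ind ints])
  have "(\<integral>\<omega>. exp (\<theta> * (\<Sum>k\<in>F. a k * Z k \<omega>)) \<partial>M) = (\<Prod>k\<in>F. \<integral>\<omega>. Y k (Z k \<omega>) \<partial>M)"
    unfolding pw by (rule indep_vars_lebesgue_integral[OF F ind ints])
  also have "\<dots> \<le> (\<Prod>k\<in>F. exp ((\<theta> * a k)\<^sup>2 * lam k / 2))"
    by (intro prod_mono conjI integral_nonneg_AE AE_I2) (auto simp: Y_def subg_bound)
  also have "\<dots> = exp (\<theta>\<^sup>2 * (\<Sum>k\<in>F. (a k)\<^sup>2 * lam k) / 2)"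
    unfolding exp_sum[OF F, symmetric] by (simp add: sum_distrib_left sum_divide_distrib power_mult_distrib mult_ac)
  finally show "(\<integral>\<omega>. exp (\<theta> * (\<Sum>k\<in>F. a k * Z k \<omega>)) \<partial>M) \<le> exp (\<theta>\<^sup>2 * (\<Sum>k\<in>F. (a k)\<^sup>2 * lam k) / 2)" .
qed
lemma fourth_moment:
  fixes Y :: "'a \<Rightarrow> real"
  assumes Ym[measurable]: "Y \<in> borel_measurable M"
    and mgf: "\<And>\<theta>. integrable M (\<lambda>\<omega>. exp (\<theta> * Y \<omega>))"
      "\<And>\<theta>. (\<integral>\<omega>. exp (\<theta> * Y \<omega>) \<partial>M) \<le> exp (\<theta>\<^sup>2 * s / 2)"
    and s: "s \<le> \<sigma>\<^sup>2" and \<sigma>: "0 < \<sigma>"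
  shows "(\<integral>\<^sup>+\<omega>. ennreal ((Y \<omega>)^4) \<partial>M) \<le> ennreal (84 * \<sigma>^4)"
proof -
  define \<theta> where "\<theta> = 1 / \<sigma>"
  have pw: "(Y \<omega>)^4 \<le> 24 * \<sigma>^4 * (exp (\<theta> * Y \<omega>) + exp ((-\<theta>) * Y \<omega>))" for \<omega>
  proof -
    have "(Y \<omega>)^4 = \<sigma>^4 * (\<theta> * Y \<omega>)^4" unfolding \<theta>_def using \<sigma> by (simp add: power_mult_distrib field_simps)
    also have "\<dots> \<le> \<sigma>^4 * (24 * (exp (\<theta> * Y \<omega>) + exp (- (\<theta> * Y \<omega>))))"
      by (rule mult_left_mono[OF x4_le_cosh]) simp
    also have "\<dots> = 24 * \<sigma>^4 * (exp (\<theta> * Y \<omega>) + exp ((-\<theta>) * Y \<omega>))"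
      by (simp add: algebra_simps)
    finally show ?thesis .
  qed
  have "(\<integral>\<^sup>+\<omega>. ennreal ((Y \<omega>)^4) \<partial>M) \<le> (\<integral>\<^sup>+\<omega>. ennreal (24 * \<sigma>^4 * (exp (\<theta> * Y \<omega>) + exp ((-\<theta>) * Y \<omega>))) \<partial>M)"
    by (intro nn_integral_mono ennreal_leI pw)
  also have "\<dots> = ennreal (\<integral>\<omega>. 24 * \<sigma>^4 * (exp (\<theta> * Y \<omega>) + exp ((-\<theta>) * Y \<omega>)) \<partial>M)"
    using mgf(1)[of \<theta>] mgf(1)[of "-\<theta>"] by (intro nn_integral_eq_integral) auto
  also have "(\<integral>\<omega>. 24 * \<sigma>^4 * (exp (\<theta> * Y \<omega>) + exp ((-\<theta>) * Y \<omega>)) \<partial>M)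
      = 24 * \<sigma>^4 * ((\<integral>\<omega>. exp (\<theta> * Y \<omega>) \<partial>M) + (\<integral>\<omega>. exp ((-\<theta>) * Y \<omega>) \<partial>M))"
    using mgf(1)[of \<theta>] mgf(1)[of "-\<theta>"] by simp
  also have "\<dots> \<le> 24 * \<sigma>^4 * (exp (\<theta>\<^sup>2 * s / 2) + exp ((-\<theta>)\<^sup>2 * s / 2))"
    using mgf(2)[of \<theta>] mgf(2)[of "-\<theta>"] by (intro mult_left_mono add_mono) auto
  also have "\<dots> \<le> 24 * \<sigma>^4 * (7/4 + 7/4)"
  proof -
    have "\<theta>\<^sup>2 * s \<le> \<theta>\<^sup>2 * \<sigma>\<^sup>2" using s by (intro mult_left_mono) auto
    also have "\<theta>\<^sup>2 * \<sigma>\<^sup>2 = 1" unfolding \<theta>_def using \<sigma> by (simp add: power_divide)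
    finally have a: "\<theta>\<^sup>2 * s / 2 \<le> 1/2" by simp
    have "exp (\<theta>\<^sup>2 * s / 2) \<le> exp (1/2)" using a by simp
    also have "exp (1/2::real) \<le> 1 + 1/2 + (1/2)\<^sup>2" by (rule exp_bound) auto
    finally have "exp (\<theta>\<^sup>2 * s / 2) \<le> 7/4" by (simp add: power2_eq_square)
    thus ?thesis by (intro mult_left_mono) auto
  qed
  finally show ?thesis by (simp add: ennreal_leI)
qed
lemma fatou_ae:
  fixes u :: "nat \<Rightarrow> 'a \<Rightarrow> real" and \<phi> :: "real \<Rightarrow> real"
  assumes um: "\<And>n. u n \<in> borel_measurable M"
    and \<phi>m: "\<phi> \<in> borel_measurable borel" and \<phi>c: "\<And>x. isCont \<phi> x"
    and lim: "AE \<omega> in M. (\<lambda>n. u n \<omega>) \<longlonglongrightarrow> v \<omega>"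
    and bd: "eventually (\<lambda>n. (\<integral>\<^sup>+\<omega>. ennreal (\<phi> (u n \<omega>)) \<partial>M) \<le> c) sequentially"
  shows "(\<integral>\<^sup>+\<omega>. ennreal (\<phi> (v \<omega>)) \<partial>M) \<le> c"
proof -
  have "AE \<omega> in M. ennreal (\<phi> (v \<omega>)) = liminf (\<lambda>n. ennreal (\<phi> (u n \<omega>)))"
    using lim
  proof eventually_elim
    case (elim \<omega>)
    have "(\<lambda>n. \<phi> (u n \<omega>)) \<longlonglongrightarrow> \<phi> (v \<omega>)" by (rule isCont_tendsto_compose[OF \<phi>c elim])
    hence "(\<lambda>n. ennreal (\<phi> (u n \<omega>))) \<longlonglongrightarrow> ennreal (\<phi> (v \<omega>))" by (rule tendsto_ennrealI)
    thus ?case by (simp add: lim_imp_Liminf)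
  qed
  hence "(\<integral>\<^sup>+\<omega>. ennreal (\<phi> (v \<omega>)) \<partial>M) = (\<integral>\<^sup>+\<omega>. liminf (\<lambda>n. ennreal (\<phi> (u n \<omega>))) \<partial>M)"
    by (rule nn_integral_cong_AE)
  also have "\<dots> \<le> liminf (\<lambda>n. \<integral>\<^sup>+\<omega>. ennreal (\<phi> (u n \<omega>)) \<partial>M)"
    using um \<phi>m by (intro nn_integral_liminf) (auto intro: measurable_compose[OF um \<phi>m])
  also have "\<dots> \<le> c" by (rule Liminf_le[OF _ bd]) simp
  finally show ?thesis .
qed

end


context KLS begin
lemma ae_subseq:
  assumes t: "t \<in> {0..1}"
  shows "\<exists>r. strict_mono r \<and> (AE \<omega> in M. (\<lambda>n. \<Sum>k<r n. Z k \<omega> * e k t) \<longlonglongrightarrow> X t \<omega>)"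
proof -
  define u where "u n \<omega> = (\<Sum>k<n. Z k \<omega> * e k t) - X t \<omega>" for n \<omega>
  have ui: "integrable M (u n)" for n
    unfolding u_def using X_int[OF t] Z_int by auto
  have L1: "(\<lambda>n. (\<integral>\<omega>. norm (u n \<omega>) \<partial>M)) \<longlonglongrightarrow> 0"
  proof (rule LIMSEQ_I)
    fix r :: real assume r: "0 < r"
    define \<eta> where "\<eta> = r / 2"
    have \<eta>: "0 < \<eta>" using r by (simp add: \<eta>_def)
    obtain N0 where N0: "\<forall>L\<ge>N0. \<forall>t\<in>{0..1}. (\<integral>\<omega>. ((\<Sum>k<L. Z k \<omega> * e k t) - X t \<omega>)\<^sup>2 \<partial>M) \<le> \<eta>\<^sup>2"
      using KL_conv[of "\<eta>\<^sup>2"] \<eta> by auto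
    have "norm ((\<integral>\<omega>. norm (u n \<omega>) \<partial>M) - 0) < r" if n: "n \<ge> N0" for n
    proof -
      have sq: "integrable M (\<lambda>\<omega>. (u n \<omega>)\<^sup>2)"
      proof -
        have "(\<lambda>\<omega>. (u n \<omega>)\<^sup>2) = (\<lambda>\<omega>. (\<Sum>j<n. \<Sum>k<n. e j t * e k t * (Z j \<omega> * Z k \<omega>)) - 2 * (\<Sum>k<n. e k t * (Z k \<omega> * X t \<omega>)) + X t \<omega> * X t \<omega>)"
        proof
          fix \<omega>
          have "(\<Sum>k<n. Z k \<omega> * e k t) * (\<Sum>k<n. Z k \<omega> * e k t) = (\<Sum>j<n. \<Sum>k<n. e j t * e k t * (Z j \<omega> * Z k \<omega>))"
            unfolding sum_product by (simp add: mult_ac)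
          moreover have "(\<Sum>k<n. Z k \<omega> * e k t) * X t \<omega> = (\<Sum>k<n. e k t * (Z k \<omega> * X t \<omega>))"
            unfolding sum_distrib_right by (simp add: mult_ac)
          ultimately show "(u n \<omega>)\<^sup>2 = (\<Sum>j<n. \<Sum>k<n. e j t * e k t * (Z j \<omega> * Z k \<omega>)) - 2 * (\<Sum>k<n. e k t * (Z k \<omega> * X t \<omega>)) + X t \<omega> * X t \<omega>"
            unfolding u_def by (simp add: power2_eq_square algebra_simps)
        qed
        moreover have "integrable M (\<lambda>\<omega>. X t \<omega> * X t \<omega>)" using X_sq[OF t] by (simp add: power2_eq_square)
        ultimately show ?thesis using ZZ_int XZ_int[OF t] by simp
      qed
      have pw: "norm (u n \<omega>) \<le> \<eta> / 2 + (u n \<omega>)\<^sup>2 / (2 * \<eta>)" for \<omega>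
      proof -
        have "0 \<le> (\<bar>u n \<omega>\<bar> - \<eta>)\<^sup>2" by simp
        moreover have "(\<bar>u n \<omega>\<bar> - \<eta>)\<^sup>2 = (u n \<omega>)\<^sup>2 - 2 * \<eta> * \<bar>u n \<omega>\<bar> + \<eta>\<^sup>2"
          by (simp add: power2_diff power2_abs mult_ac)
        ultimately have "2 * \<eta> * \<bar>u n \<omega>\<bar> \<le> \<eta>\<^sup>2 + (u n \<omega>)\<^sup>2" by linarith
        thus ?thesis using \<eta> by (simp add: field_simps power2_eq_square)
      qed
      have "(\<integral>\<omega>. norm (u n \<omega>) \<partial>M) \<le> (\<integral>\<omega>. \<eta> / 2 + (u n \<omega>)\<^sup>2 / (2 * \<eta>) \<partial>M)"
        using ui sq pw by (intro integral_mono) auto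
      also have "\<dots> = \<eta> / 2 + (\<integral>\<omega>. (u n \<omega>)\<^sup>2 \<partial>M) / (2 * \<eta>)"
        using sq by (simp add: prob_space)
      also have "\<dots> \<le> \<eta> / 2 + \<eta>\<^sup>2 / (2 * \<eta>)"
        using N0 n t \<eta> unfolding u_def by (intro add_left_mono divide_right_mono) auto
      also have "\<dots> = \<eta>" using \<eta> by (simp add: power2_eq_square field_simps)
      also have "\<dots> < r" using r by (simp add: \<eta>_def)
      finally show ?thesis by simp
    qed
    thus "\<exists>no. \<forall>n\<ge>no. norm ((\<integral>\<omega>. norm (u n \<omega>) \<partial>M) - 0) < r" by blast
  qed
  obtain r where r: "strict_mono r" "AE \<omega> in M. (\<lambda>n. u (r n) \<omega>) \<longlonglongrightarrow> 0"
    using tendsto_L1_AE_subseq[OF ui L1] by blast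
  have "AE \<omega> in M. (\<lambda>n. \<Sum>k<r n. Z k \<omega> * e k t) \<longlonglongrightarrow> X t \<omega>"
    using r(2) by eventually_elim (simp add: u_def LIM_zero_iff)
  thus ?thesis using r(1) by blast
qed

end


context KLS begin

lemma Psum_meas[measurable]: "(\<lambda>\<omega>. \<Sum>k\<in>F. Z k \<omega> * a k) \<in> borel_measurable M"
  by measurable

lemma err_sq_int: assumes t: "t \<in> {0..1}"
  shows "integrable M (\<lambda>\<omega>. ((\<Sum>k<L. Z k \<omega> * e k t) - X t \<omega>)\<^sup>2)"
proof -
  have "integrable M (\<lambda>\<omega>. (\<Sum>k<L. Z k \<omega> * e k t) * (\<Sum>k<L. Z k \<omega> * e k t))"
    unfolding sum_product by (intro Bochner_Integration.integrable_sum integrable_mult_right) (simp add: mult_ac ZZ_int)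
  moreover have "integrable M (\<lambda>\<omega>. 2 * ((\<Sum>k<L. Z k \<omega> * e k t) * X t \<omega>))"
  proof -
    have eq: "(\<Sum>k<L. Z k \<omega> * e k t) * X t \<omega> = (\<Sum>k<L. e k t * (Z k \<omega> * X t \<omega>))" for \<omega>
      by (simp add: sum_distrib_left sum_distrib_right mult_ac)
    show ?thesis unfolding eq
      by (intro integrable_mult_right Bochner_Integration.integrable_sum XZ_int[OF t])
  qed
  moreover have "integrable M (\<lambda>\<omega>. X t \<omega> * X t \<omega>)"
    using X_sq[OF t] by (simp add: power2_eq_square)
  ultimately show ?thesis unfolding sq_expand by (intro Bochner_Integration.integrable_add Bochner_Integration.integrable_diff)
qed

lemma EP_bound:
  assumes t: "t \<in> {0..1}" and B: "\<bar>cov_kernel M X t t\<bar> \<le> B"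
  shows "(\<integral>\<^sup>+\<omega>. ennreal (exp (\<theta> * (\<Sum>k<N'. Z k \<omega> * e k t))) \<partial>M) \<le> ennreal (exp (\<theta>\<^sup>2 * B / 2))"
proof -
  have eq: "(\<Sum>k<N'. Z k \<omega> * e k t) = (\<Sum>k\<in>{..<N'}. e k t * Z k \<omega>)" for \<omega> by (simp add: mult.commute)
  have "(\<integral>\<^sup>+\<omega>. ennreal (exp (\<theta> * (\<Sum>k<N'. Z k \<omega> * e k t))) \<partial>M)
      = ennreal (\<integral>\<omega>. exp (\<theta> * (\<Sum>k\<in>{..<N'}. e k t * Z k \<omega>)) \<partial>M)"
    unfolding eq by (intro nn_integral_eq_integral mgf_sum) auto
  also have "\<dots> \<le> ennreal (exp (\<theta>\<^sup>2 * (\<Sum>k\<in>{..<N'}. (e k t)\<^sup>2 * lam k) / 2))"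
    by (intro ennreal_leI mgf_sum) auto
  also have "\<dots> \<le> ennreal (exp (\<theta>\<^sup>2 * B / 2))"
  proof -
    have "(\<Sum>k\<in>{..<N'}. (e k t)\<^sup>2 * lam k) \<le> B"
      using proxy_le_cov[OF t, of N'] B by (simp add: mult.commute)
    hence "\<theta>\<^sup>2 * (\<Sum>k\<in>{..<N'}. (e k t)\<^sup>2 * lam k) \<le> \<theta>\<^sup>2 * B" by (intro mult_left_mono) auto
    thus ?thesis by (intro ennreal_leI) simp
  qed
  finally show ?thesis .
qed

lemma EX_bound:
  assumes t: "t \<in> {0..1}" and B: "\<bar>cov_kernel M X t t\<bar> \<le> B"
  shows "(\<integral>\<^sup>+\<omega>. ennreal (exp (\<theta> * X t \<omega>)) \<partial>M) \<le> ennreal (exp (\<theta>\<^sup>2 * B / 2))"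
proof -
  obtain r where r: "strict_mono r" "AE \<omega> in M. (\<lambda>n. \<Sum>k<r n. Z k \<omega> * e k t) \<longlonglongrightarrow> X t \<omega>"
    using ae_subseq[OF t] by blast
  show ?thesis
  proof (rule fatou_ae[where u="\<lambda>n \<omega>. \<Sum>k<r n. Z k \<omega> * e k t" and \<phi>="\<lambda>x. exp (\<theta> * x)"])
    show "\<And>n. (\<lambda>\<omega>. \<Sum>k<r n. Z k \<omega> * e k t) \<in> borel_measurable M" by measurable
    show "(\<lambda>x. exp (\<theta> * x)) \<in> borel_measurable borel" by measurable
    show "\<And>x. isCont (\<lambda>x. exp (\<theta> * x)) x" by (intro continuous_intros)
    show "AE \<omega> in M. (\<lambda>n. \<Sum>k<r n. Z k \<omega> * e k t) \<longlonglongrightarrow> X t \<omega>" by (rule r(2))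
    show "\<forall>\<^sub>F n in sequentially. (\<integral>\<^sup>+\<omega>. ennreal (exp (\<theta> * (\<Sum>k<r n. Z k \<omega> * e k t))) \<partial>M) \<le> ennreal (exp (\<theta>\<^sup>2 * B / 2))"
      using EP_bound[OF t B] by simp
  qed
qed

lemma D4_bound:
  assumes t: "t \<in> {0..1}" and \<epsilon>: "0 < \<epsilon>"
    and hL: "(\<integral>\<omega>. ((\<Sum>k<L. Z k \<omega> * e k t) - X t \<omega>)\<^sup>2 \<partial>M) \<le> \<epsilon>\<^sup>2"
  shows "(\<integral>\<^sup>+\<omega>. ennreal ((X t \<omega> - (\<Sum>k<L. Z k \<omega> * e k t))^4) \<partial>M) \<le> ennreal (84 * \<epsilon>^4)"
proof -
  obtain r where r: "strict_mono r" "AE \<omega> in M. (\<lambda>n. \<Sum>k<r n. Z k \<omega> * e k t) \<longlonglongrightarrow> X t \<omega>"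
    using ae_subseq[OF t] by blast
  define P where "P n \<omega> = (\<Sum>k<n. Z k \<omega> * e k t)" for n \<omega>
  show ?thesis
  proof (rule fatou_ae[where u="\<lambda>n \<omega>. P (r n) \<omega> - P L \<omega>" and \<phi>="\<lambda>x. x^4"])
    show "\<And>n. (\<lambda>\<omega>. P (r n) \<omega> - P L \<omega>) \<in> borel_measurable M" unfolding P_def by measurable
    show "(\<lambda>x::real. x^4) \<in> borel_measurable borel" by measurable
    show "\<And>x. isCont (\<lambda>x::real. x^4) x" by (intro continuous_intros)
    show "AE \<omega> in M. (\<lambda>n. P (r n) \<omega> - P L \<omega>) \<longlonglongrightarrow> X t \<omega> - (\<Sum>k<L. Z k \<omega> * e k t)"
      using r(2) by eventually_elim (unfold P_def, intro tendsto_diff tendsto_const)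
    have "(\<integral>\<^sup>+\<omega>. ennreal ((P (r n) \<omega> - P L \<omega>)^4) \<partial>M) \<le> ennreal (84 * \<epsilon>^4)" if n: "n \<ge> L" for n
    proof -
      have Ln: "L \<le> r n" using seq_suble[OF r(1), of n] n by simp
      have eq: "P (r n) \<omega> - P L \<omega> = (\<Sum>k\<in>{L..<r n}. e k t * Z k \<omega>)" for \<omega>
      proof -
        have "P (r n) \<omega> = P L \<omega> + (\<Sum>k\<in>{L..<r n}. Z k \<omega> * e k t)"
          unfolding P_def using sum.atLeastLessThan_concat[of 0 L "r n" "\<lambda>k. Z k \<omega> * e k t"] Ln
          by (simp add: atLeast0LessThan)
        thus ?thesis by (simp add: mult.commute)
      qed
      have s: "(\<Sum>k\<in>{L..<r n}. (e k t)\<^sup>2 * lam k) \<le> \<epsilon>\<^sup>2"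
        using proxy_tail[OF t Ln] hL by (simp add: mult.commute)
      show ?thesis unfolding eq
        by (rule fourth_moment[OF _ mgf_sum(1) mgf_sum(2) s \<epsilon>]) auto
    qed
    thus "\<forall>\<^sub>F n in sequentially. (\<integral>\<^sup>+\<omega>. ennreal ((P (r n) \<omega> - P L \<omega>)^4) \<partial>M) \<le> ennreal (84 * \<epsilon>^4)"
      by (intro eventually_sequentiallyI) auto
  qed
qed

end


lemma nn_lin:
  fixes f g :: "'b \<Rightarrow> real"
  assumes [measurable]: "f \<in> borel_measurable M'" "g \<in> borel_measurable M'"
    and "a \<ge> 0" "b \<ge> 0" "F \<ge> 0" "G \<ge> 0" "\<And>\<omega>. 0 \<le> f \<omega>" "\<And>\<omega>. 0 \<le> g \<omega>"
    and If: "(\<integral>\<^sup>+\<omega>. ennreal (f \<omega>) \<partial>M') \<le> ennreal F"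
    and Ig: "(\<integral>\<^sup>+\<omega>. ennreal (g \<omega>) \<partial>M') \<le> ennreal G"
  shows "(\<integral>\<^sup>+\<omega>. ennreal (a * f \<omega> + b * g \<omega>) \<partial>M') \<le> ennreal (a * F + b * G)"
proof -
  have "(\<integral>\<^sup>+\<omega>. ennreal (a * f \<omega> + b * g \<omega>) \<partial>M') = (\<integral>\<^sup>+\<omega>. ennreal a * ennreal (f \<omega>) + ennreal b * ennreal (g \<omega>) \<partial>M')"
    using assms by (intro nn_integral_cong) (simp add: ennreal_plus ennreal_mult)
  also have "\<dots> = ennreal a * (\<integral>\<^sup>+\<omega>. ennreal (f \<omega>) \<partial>M') + ennreal b * (\<integral>\<^sup>+\<omega>. ennreal (g \<omega>) \<partial>M')"
    by (simp add: nn_integral_add nn_integral_cmult)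
  also have "\<dots> \<le> ennreal a * ennreal F + ennreal b * ennreal G"
    using If Ig by (intro add_mono mult_left_mono) auto
  also have "\<dots> = ennreal (a * F + b * G)"
    using assms by (simp add: ennreal_plus ennreal_mult)
  finally show ?thesis .
qed

context KLS begin

lemma point_bound:
  assumes t: "t \<in> {0..1}" and \<epsilon>: "0 < \<epsilon>"
    and hL: "(\<integral>\<omega>. ((\<Sum>k<L. Z k \<omega> * e k t) - X t \<omega>)\<^sup>2 \<partial>M) \<le> \<epsilon>\<^sup>2"
    and B: "\<bar>cov_kernel M X t t\<bar> \<le> B" and K: "0 \<le> K"
  shows "(\<integral>\<^sup>+\<omega>. ennreal (c\<^sup>2 * ((X t \<omega> - (\<Sum>k<L. Z k \<omega> * e k t))^4 / (2 * \<epsilon>\<^sup>2))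
      + 4 * c\<^sup>2 * \<epsilon>\<^sup>2 * (exp (4 * c * X t \<omega>) + exp (4 * c * (\<Sum>k<L. Z k \<omega> * e k t)))
      + K\<^sup>2 * (X t \<omega> - (\<Sum>k<L. Z k \<omega> * e k t))\<^sup>2) \<partial>M)
    \<le> ennreal (\<epsilon>\<^sup>2 * (42 * c\<^sup>2 + 8 * c\<^sup>2 * exp (8 * c\<^sup>2 * B) + K\<^sup>2))"
proof -
  define P where "P \<omega> = (\<Sum>k<L. Z k \<omega> * e k t)" for \<omega>
  have Pm[measurable]: "P \<in> borel_measurable M" unfolding P_def by measurable
  have Xm[measurable]: "X t \<in> borel_measurable M" by (rule X_rv[OF t])
  have B0: "0 \<le> B" using B by linarith
  have E2: "(\<integral>\<^sup>+\<omega>. ennreal (1 * exp ((4 * c) * X t \<omega>) + 1 * exp ((4 * c) * P \<omega>)) \<partial>M)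
      \<le> ennreal (1 * exp ((4 * c)\<^sup>2 * B / 2) + 1 * exp ((4 * c)\<^sup>2 * B / 2))"
  proof (rule nn_lin)
    show "(\<integral>\<^sup>+\<omega>. ennreal (exp ((4 * c) * X t \<omega>)) \<partial>M) \<le> ennreal (exp ((4 * c)\<^sup>2 * B / 2))"
      by (rule EX_bound[OF t B])
    show "(\<integral>\<^sup>+\<omega>. ennreal (exp ((4 * c) * P \<omega>)) \<partial>M) \<le> ennreal (exp ((4 * c)\<^sup>2 * B / 2))"
      unfolding P_def by (rule EP_bound[OF t B])
  qed auto
  have D2: "(\<integral>\<^sup>+\<omega>. ennreal ((X t \<omega> - P \<omega>)\<^sup>2) \<partial>M) \<le> ennreal (\<epsilon>\<^sup>2)"
  proof -
    have "(\<integral>\<^sup>+\<omega>. ennreal ((X t \<omega> - P \<omega>)\<^sup>2) \<partial>M) = (\<integral>\<^sup>+\<omega>. ennreal ((P \<omega> - X t \<omega>)\<^sup>2) \<partial>M)"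
      by (simp add: power2_commute)
    also have "\<dots> = ennreal (\<integral>\<omega>. (P \<omega> - X t \<omega>)\<^sup>2 \<partial>M)"
      unfolding P_def by (intro nn_integral_eq_integral err_sq_int[OF t]) auto
    also have "\<dots> \<le> ennreal (\<epsilon>\<^sup>2)" using hL unfolding P_def by (intro ennreal_leI)
    finally show ?thesis .
  qed
  have D4: "(\<integral>\<^sup>+\<omega>. ennreal ((X t \<omega> - P \<omega>)^4) \<partial>M) \<le> ennreal (84 * \<epsilon>^4)"
    unfolding P_def by (rule D4_bound[OF t \<epsilon> hL])
  have in2: "(\<integral>\<^sup>+\<omega>. ennreal ((4 * c\<^sup>2 * \<epsilon>\<^sup>2) * (1 * exp ((4 * c) * X t \<omega>) + 1 * exp ((4 * c) * P \<omega>))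
       + K\<^sup>2 * (X t \<omega> - P \<omega>)\<^sup>2) \<partial>M)
     \<le> ennreal ((4 * c\<^sup>2 * \<epsilon>\<^sup>2) * (1 * exp ((4 * c)\<^sup>2 * B / 2) + 1 * exp ((4 * c)\<^sup>2 * B / 2)) + K\<^sup>2 * \<epsilon>\<^sup>2)"
    by (rule nn_lin[OF _ _ _ _ _ _ _ _ E2 D2]) auto
  have all: "(\<integral>\<^sup>+\<omega>. ennreal ((c\<^sup>2 / (2 * \<epsilon>\<^sup>2)) * (X t \<omega> - P \<omega>)^4 + 1 *
      ((4 * c\<^sup>2 * \<epsilon>\<^sup>2) * (1 * exp ((4 * c) * X t \<omega>) + 1 * exp ((4 * c) * P \<omega>)) + K\<^sup>2 * (X t \<omega> - P \<omega>)\<^sup>2)) \<partial>M)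
     \<le> ennreal ((c\<^sup>2 / (2 * \<epsilon>\<^sup>2)) * (84 * \<epsilon>^4) + 1 *
      ((4 * c\<^sup>2 * \<epsilon>\<^sup>2) * (1 * exp ((4 * c)\<^sup>2 * B / 2) + 1 * exp ((4 * c)\<^sup>2 * B / 2)) + K\<^sup>2 * \<epsilon>\<^sup>2))"
  proof (rule nn_lin[OF _ _ _ _ _ _ _ _ D4 in2])
    show "(\<lambda>\<omega>. 4 * c\<^sup>2 * \<epsilon>\<^sup>2 * (1 * exp (4 * c * X t \<omega>) + 1 * exp (4 * c * P \<omega>)) + K\<^sup>2 * (X t \<omega> - P \<omega>)\<^sup>2) \<in> borel_measurable M"
      by measurable
    show "0 \<le> 4 * c\<^sup>2 * \<epsilon>\<^sup>2 * (1 * exp ((4 * c)\<^sup>2 * B / 2) + 1 * exp ((4 * c)\<^sup>2 * B / 2)) + K\<^sup>2 * \<epsilon>\<^sup>2"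
      by (intro add_nonneg_nonneg mult_nonneg_nonneg) auto
    show "\<And>\<omega>. 0 \<le> 4 * c\<^sup>2 * \<epsilon>\<^sup>2 * (1 * exp (4 * c * X t \<omega>) + 1 * exp (4 * c * P \<omega>)) + K\<^sup>2 * (X t \<omega> - P \<omega>)\<^sup>2"
      by (intro add_nonneg_nonneg mult_nonneg_nonneg) auto
  qed (auto simp: zero_le_even_power)
  have lhs: "(c\<^sup>2 / (2 * \<epsilon>\<^sup>2)) * (X t \<omega> - P \<omega>)^4 + 1 *
      ((4 * c\<^sup>2 * \<epsilon>\<^sup>2) * (1 * exp ((4 * c) * X t \<omega>) + 1 * exp ((4 * c) * P \<omega>)) + K\<^sup>2 * (X t \<omega> - P \<omega>)\<^sup>2)
     = c\<^sup>2 * ((X t \<omega> - P \<omega>)^4 / (2 * \<epsilon>\<^sup>2))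
      + 4 * c\<^sup>2 * \<epsilon>\<^sup>2 * (exp (4 * c * X t \<omega>) + exp (4 * c * P \<omega>))
      + K\<^sup>2 * (X t \<omega> - P \<omega>)\<^sup>2" for \<omega>
    by (simp add: algebra_simps)
  have rhs: "(c\<^sup>2 / (2 * \<epsilon>\<^sup>2)) * (84 * \<epsilon>^4) + 1 *
      ((4 * c\<^sup>2 * \<epsilon>\<^sup>2) * (1 * exp ((4 * c)\<^sup>2 * B / 2) + 1 * exp ((4 * c)\<^sup>2 * B / 2)) + K\<^sup>2 * \<epsilon>\<^sup>2)
     = \<epsilon>\<^sup>2 * (42 * c\<^sup>2 + 8 * c\<^sup>2 * exp (8 * c\<^sup>2 * B) + K\<^sup>2)"
    using \<epsilon> by (simp add: field_simps power2_eq_square power4_eq_xxxx)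
  show ?thesis using all[unfolded lhs rhs] unfolding P_def .
qed

end


theorem theorem6:
  fixes M :: "'a measure" and X :: "real \<Rightarrow> 'a \<Rightarrow> real"
    and e :: "nat \<Rightarrow> real \<Rightarrow> real" and lam :: "nat \<Rightarrow> real"
    and g :: "real \<Rightarrow> real \<Rightarrow> real" and c\<^sub>g K\<^sub>g :: real
  assumes M: "prob_space M"
    and X_meas: "(\<lambda>(t,\<omega>). X t \<omega>) \<in> borel_measurable (restrict_space lborel {0..1} \<Otimes>\<^sub>M M)"
    and X_rv: "\<And>t. t \<in> {0..1} \<Longrightarrow> X t \<in> borel_measurable M"
    and X_int: "\<And>t. t \<in> {0..1} \<Longrightarrow> integrable M (X t)"
    and X_centered: "\<And>t. t \<in> {0..1} \<Longrightarrow> (\<integral>\<omega>. X t \<omega> \<partial>M) = 0"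
    and X_sq: "\<And>t. t \<in> {0..1} \<Longrightarrow> integrable M (\<lambda>\<omega>. (X t \<omega>)\<^sup>2)"
    and cov_cont: "continuous_on ({0..1} \<times> {0..1}) (\<lambda>(s,t). cov_kernel M X s t)"
    and e_meas: "\<And>k. e k \<in> borel_measurable lborel"
    and e_orth: "\<And>j k. set_integrable lborel {0..1} (\<lambda>t. e j t * e k t)
        \<and> (LINT t:{0..1}|lborel. e j t * e k t) = (if j = k then 1 else 0)"
    and e_eigen: "\<And>k t. t \<in> {0..1} \<Longrightarrow>
        (LINT s:{0..1}|lborel. cov_kernel M X s t * e k s) = lam k * e k t"
    and lam_nonneg: "\<And>k. lam k \<ge> 0"
    and lam_decr: "decseq lam"
    and KL_conv: "\<And>\<delta>. \<delta> > 0 \<Longrightarrow> \<exists>N. \<forall>L\<ge>N. \<forall>t\<in>{0..1}.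
        (\<integral>\<omega>. ((\<Sum>k<L. KL_coeff X e k \<omega> * e k t) - X t \<omega>)\<^sup>2 \<partial>M) \<le> \<delta>"
    and Z_indep: "prob_space.indep_vars M (\<lambda>_. borel) (KL_coeff X e) UNIV"
    and Z_subg: "\<And>k. subgaussian M (KL_coeff X e k) 0 (sqrt (lam k))"
    and K\<^sub>g_nonneg: "K\<^sub>g \<ge> 0"
    and g_cond: "\<And>t x y. t \<in> {0..1} \<Longrightarrow>
        g t x - g t y \<le> max \<bar>exp (c\<^sub>g * x) - exp (c\<^sub>g * y)\<bar> (K\<^sub>g * \<bar>x - y\<bar>)"
  shows "\<exists>C::real. \<forall>(T::nat) (ts::nat \<Rightarrow> real) (w::nat \<Rightarrow> real) (f::(nat \<Rightarrow> real) \<Rightarrow> real) (\<epsilon>::real).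
     T \<ge> 1 \<longrightarrow> (\<forall>i<T. ts i \<in> {0..1}) \<longrightarrow> (\<forall>i<T. w i \<ge> 0) \<longrightarrow> (\<Sum>i<T. w i) = 1 \<longrightarrow>
     (\<forall>x y. \<bar>f x - f y\<bar> \<le> (\<Sum>i<T. w i * \<bar>x i - y i\<bar>)) \<longrightarrow>
     0 < \<epsilon> \<longrightarrow> \<epsilon> \<le> 1 \<longrightarrow>
     (\<integral>\<^sup>+\<omega>. ennreal ((f (\<lambda>i. g (ts i) (X (ts i) \<omega>))
          - f (\<lambda>i. g (ts i) (\<Sum>k<KL_trunc M X e \<epsilon>. KL_coeff X e k \<omega> * e k (ts i))))\<^sup>2) \<partial>M)
       \<le> ennreal (C * \<epsilon>\<^sup>2)"
proof -
  have KL: "KLS M X e lam"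
    unfolding KLS_def KLS_axioms_def
    using M X_meas X_rv X_int X_sq cov_cont e_meas e_orth e_eigen lam_nonneg KL_conv Z_indep Z_subg
    by blast
  interpret KLS M X e lam by (rule KL)
  obtain B where B: "0 \<le> B" "\<And>s t. s \<in> {0..1} \<Longrightarrow> t \<in> {0..1} \<Longrightarrow> \<bar>cov_kernel M X s t\<bar> \<le> B"
    using cov_bound by blast
  define C where "C = 42 * c\<^sub>g\<^sup>2 + 8 * c\<^sub>g\<^sup>2 * exp (8 * c\<^sub>g\<^sup>2 * B) + K\<^sub>g\<^sup>2"
  show ?thesis
  proof (intro exI[of _ C] allI impI)
    fix T :: nat and ts :: "nat \<Rightarrow> real" and w :: "nat \<Rightarrow> real" and f :: "(nat \<Rightarrow> real) \<Rightarrow> real" and \<epsilon> :: real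
    assume T: "T \<ge> 1" and ts: "\<forall>i<T. ts i \<in> {0..1}" and w0: "\<forall>i<T. w i \<ge> 0" and w1: "(\<Sum>i<T. w i) = 1"
      and fL: "\<forall>x y. \<bar>f x - f y\<bar> \<le> (\<Sum>i<T. w i * \<bar>x i - y i\<bar>)"
      and \<epsilon>0: "0 < \<epsilon>" and \<epsilon>1: "\<epsilon> \<le> 1"
    define L where "L = KL_trunc M X e \<epsilon>"
    define Q where "Q L' \<longleftrightarrow> (\<forall>t\<in>{0..1}. (\<integral>\<omega>. ((\<Sum>k<L'. KL_coeff X e k \<omega> * e k t) - X t \<omega>)\<^sup>2 \<partial>M) \<le> \<epsilon>\<^sup>2)" for L'
    obtain N0 where N0: "\<forall>L'\<ge>N0. \<forall>t\<in>{0..1}. (\<integral>\<omega>. ((\<Sum>k<L'. KL_coeff X e k \<omega> * e k t) - X t \<omega>)\<^sup>2 \<partial>M) \<le> \<epsilon>\<^sup>2"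
      using KL_conv[of "\<epsilon>\<^sup>2"] \<epsilon>0 by auto
    have "Q N0" unfolding Q_def using N0 by auto
    hence "Q (LEAST L'. Q L')" by (rule LeastI)
    hence hL: "\<And>t. t \<in> {0..1} \<Longrightarrow> (\<integral>\<omega>. ((\<Sum>k<L. KL_coeff X e k \<omega> * e k t) - X t \<omega>)\<^sup>2 \<partial>M) \<le> \<epsilon>\<^sup>2"
      unfolding L_def KL_trunc_def Q_def by blast
    define P where "P i \<omega> = (\<Sum>k<L. KL_coeff X e k \<omega> * e k (ts i))" for i \<omega>
    define H where "H i \<omega> = c\<^sub>g\<^sup>2 * ((X (ts i) \<omega> - P i \<omega>)^4 / (2 * \<epsilon>\<^sup>2))
      + 4 * c\<^sub>g\<^sup>2 * \<epsilon>\<^sup>2 * (exp (4 * c\<^sub>g * X (ts i) \<omega>) + exp (4 * c\<^sub>g * P i \<omega>))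
      + K\<^sub>g\<^sup>2 * (X (ts i) \<omega> - P i \<omega>)\<^sup>2" for i \<omega>
    have H0: "0 \<le> H i \<omega>" for i \<omega>
      unfolding H_def by (intro add_nonneg_nonneg mult_nonneg_nonneg divide_nonneg_nonneg) (auto simp: zero_le_even_power)
    have Hm: "(\<lambda>\<omega>. H i \<omega>) \<in> borel_measurable M" if i: "i < T" for i
    proof -
      have [measurable]: "X (ts i) \<in> borel_measurable M" using X_rv ts i by auto
      show ?thesis unfolding H_def P_def by measurable
    qed
    have HI: "(\<integral>\<^sup>+\<omega>. ennreal (H i \<omega>) \<partial>M) \<le> ennreal (C * \<epsilon>\<^sup>2)" if i: "i < T" for i
    proof -
      have t: "ts i \<in> {0..1}" using ts i by auto
      have "(\<integral>\<^sup>+\<omega>. ennreal (H i \<omega>) \<partial>M) \<le> ennreal (\<epsilon>\<^sup>2 * (42 * c\<^sub>g\<^sup>2 + 8 * c\<^sub>g\<^sup>2 * exp (8 * c\<^sub>g\<^sup>2 * B) + K\<^sub>g\<^sup>2))"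
        unfolding H_def P_def by (rule point_bound[OF t \<epsilon>0 hL[OF t] B(2)[OF t t] K\<^sub>g_nonneg])
      thus ?thesis by (simp add: C_def mult.commute)
    qed
    have pw: "(f (\<lambda>i. g (ts i) (X (ts i) \<omega>)) - f (\<lambda>i. g (ts i) (P i \<omega>)))\<^sup>2 \<le> (\<Sum>i<T. w i * H i \<omega>)" for \<omega>
    proof -
      define u where "u i = \<bar>g (ts i) (X (ts i) \<omega>) - g (ts i) (P i \<omega>)\<bar>" for i
      have "\<bar>f (\<lambda>i. g (ts i) (X (ts i) \<omega>)) - f (\<lambda>i. g (ts i) (P i \<omega>))\<bar> \<le> (\<Sum>i<T. w i * u i)"
        using fL unfolding u_def by auto
      hence "\<bar>f (\<lambda>i. g (ts i) (X (ts i) \<omega>)) - f (\<lambda>i. g (ts i) (P i \<omega>))\<bar>\<^sup>2 \<le> (\<Sum>i<T. w i * u i)\<^sup>2"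
        by (intro power_mono) auto
      also have "\<dots> \<le> (\<Sum>i<T. w i * (u i)\<^sup>2)" by (rule weighted_sq[OF w0 w1])
      also have "\<dots> \<le> (\<Sum>i<T. w i * H i \<omega>)"
      proof (intro sum_mono mult_left_mono)
        fix i assume i: "i \<in> {..<T}"
        have t: "ts i \<in> {0..1}" using ts i by auto
        show "0 \<le> w i" using w0 i by auto
        have "(g (ts i) (X (ts i) \<omega>) - g (ts i) (P i \<omega>))\<^sup>2 \<le> H i \<omega>"
          unfolding H_def by (rule gpoint[OF g_cond[OF t] K\<^sub>g_nonneg \<epsilon>0])
        thus "(u i)\<^sup>2 \<le> H i \<omega>" unfolding u_def by (simp add: power2_abs)
      qed
      finally show ?thesis by (simp add: power2_abs)
    qed
    have "(\<integral>\<^sup>+\<omega>. ennreal ((f (\<lambda>i. g (ts i) (X (ts i) \<omega>)) - f (\<lambda>i. g (ts i) (P i \<omega>)))\<^sup>2) \<partial>M)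
        \<le> (\<integral>\<^sup>+\<omega>. ennreal (\<Sum>i<T. w i * H i \<omega>) \<partial>M)"
      by (intro nn_integral_mono ennreal_leI pw)
    also have "\<dots> = (\<integral>\<^sup>+\<omega>. (\<Sum>i<T. ennreal (w i) * ennreal (H i \<omega>)) \<partial>M)"
    proof (intro nn_integral_cong)
      fix \<omega>
      have "ennreal (\<Sum>i<T. w i * H i \<omega>) = (\<Sum>i<T. ennreal (w i * H i \<omega>))"
        using w0 H0 by (intro sum_ennreal[symmetric]) auto
      also have "\<dots> = (\<Sum>i<T. ennreal (w i) * ennreal (H i \<omega>))"
        using w0 H0 by (intro sum.cong refl) (simp add: ennreal_mult)
      finally show "ennreal (\<Sum>i<T. w i * H i \<omega>) = (\<Sum>i<T. ennreal (w i) * ennreal (H i \<omega>))" .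
    qed
    also have "\<dots> = (\<Sum>i<T. ennreal (w i) * (\<integral>\<^sup>+\<omega>. ennreal (H i \<omega>) \<partial>M))"
      using Hm by (subst nn_integral_sum) (auto simp: nn_integral_cmult)
    also have "\<dots> \<le> (\<Sum>i<T. ennreal (w i) * ennreal (C * \<epsilon>\<^sup>2))"
      using HI by (intro sum_mono mult_left_mono) auto
    also have "\<dots> = ennreal (\<Sum>i<T. w i * (C * \<epsilon>\<^sup>2))"
    proof -
      have C0: "0 \<le> C" unfolding C_def by simp
      have "(\<Sum>i<T. ennreal (w i) * ennreal (C * \<epsilon>\<^sup>2)) = (\<Sum>i<T. ennreal (w i * (C * \<epsilon>\<^sup>2)))"
        using w0 C0 by (intro sum.cong refl) (simp add: ennreal_mult)
      also have "\<dots> = ennreal (\<Sum>i<T. w i * (C * \<epsilon>\<^sup>2))"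
        using w0 C0 by (intro sum_ennreal) auto
      finally show ?thesis .
    qed
    also have "(\<Sum>i<T. w i * (C * \<epsilon>\<^sup>2)) = C * \<epsilon>\<^sup>2"
      using w1 by (simp add: sum_distrib_right[symmetric])
    finally show "(\<integral>\<^sup>+\<omega>. ennreal ((f (\<lambda>i. g (ts i) (X (ts i) \<omega>))
          - f (\<lambda>i. g (ts i) (\<Sum>k<KL_trunc M X e \<epsilon>. KL_coeff X e k \<omega> * e k (ts i))))\<^sup>2) \<partial>M)
       \<le> ennreal (C * \<epsilon>\<^sup>2)" unfolding P_def L_def .
  qed
qed



end
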